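(* Let $\phi:\mathbb{R}^d\to\mathbb{R}^k$ be a differentiable feature map with $\sup_{\boldsymbol{x}}\|\phi(\boldsymbol{x})\|_2\le B$ and $\sup_{\boldsymbol{x}}\|J_\phi(\boldsymbol{x})\|_F\le L$, where $J_\phi(\boldsymbol{x})\in\mathbb{R}^{k\times d}$ is the Jacobian. Let $\Lambda>0$ and define $$\mathcal{F}_{\mathrm{unc}} = \{\boldsymbol{x}\mapsto \boldsymbol{W}\phi(\boldsymbol{x}) : \boldsymbol{W}\in\mathbb{R}^{d\times k},\ \|\boldsymbol{W}\|_F\le\Lambda\},\qquad \mathcal{F}_{\mathrm{cons}} = \{\boldsymbol{x}\mapsto J_\phi(\boldsymbol{x})^\top\boldsymbol{w} : \boldsymbol{w}\in\mathbb{R}^k,\ \|\boldsymbol{w}\|_2\le\Lambda\}$$ (the latter being the gradients of the potentials $\boldsymbol{x}\mapsto\boldsymbol{w}^\top\phi(\boldsymbol{x})$). For a sample $S=\{\boldsymbol{x}_1,\dots,\boldsymbol{x}_n\}\subset\mathbb{R}^d$ and a class $\mathcal{F}$ of functions $\mathbb{R}^d\to\mathbb{R}^d$, define the empirical Rademacher complexity $$\hat{\mathfrak{R}}_S(\mathcal{F}) = \frac{1}{n}\mathbb{E}_{\boldsymbol{\sigma}}\left[\sup_{f\in\mathcal{F}}\sum_{i=1}^n\langle\boldsymbol{\sigma}_i, f(\boldsymbol{x}_i)\rangle\right],$$ where $\boldsymbol{\sigma}_1,\dots,\boldsymbol{\sigma}_n$ are independent, each uniformly distributed on $\{-1,1\}^d$.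 Then $$\hat{\mathfrak{R}}_S(\mathcal{F}_{\mathrm{unc}})\le\frac{\Lambda B\sqrt{d}}{\sqrt{n}},\qquad \hat{\mathfrak{R}}_S(\mathcal{F}_{\mathrm{cons}})\le\frac{\Lambda L}{\sqrt{n}}.$$ *)

theory Defs
  imports "HOL-Analysis.Analysis" "HOL-Probability.Probability"
begin

definition frob_norm :: "real^'n^'m \<Rightarrow> real" where
  "frob_norm A = sqrt (\<Sum>i\<in>UNIV. \<Sum>j\<in>UNIV. (A $ i $ j)^2)"

definition sign_vecs :: "(real^'d) set" where
  "sign_vecs = {v. \<forall>j. v $ j \<in> {-1, 1}}"

text \<open>The expectation over independent uniform sigma_i in {-1,1}^d is the
  uniform average over all sign assignments sigma : {0..<n} -> {-1,1}^d.\<close>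
definition emp_rademacher :: "nat \<Rightarrow> (nat \<Rightarrow> real^'d) \<Rightarrow> ((real^'d \<Rightarrow> real^'d) set) \<Rightarrow> real" where
  "emp_rademacher n x F =
     (1 / real n) * measure_pmf.expectation
        (pmf_of_set (PiE {..<n} (\<lambda>_. sign_vecs)))
        (\<lambda>\<sigma>. SUP f\<in>F. \<Sum>i<n. \<sigma> i \<bullet> f (x i))"

definition F_unc :: "(real^'d \<Rightarrow> real^'k) \<Rightarrow> real \<Rightarrow> (real^'d \<Rightarrow> real^'d) set" where
  "F_unc \<phi> \<Lambda> = {(\<lambda>x. W *v \<phi> x) | W :: real^'k^'d. frob_norm W \<le> \<Lambda>}"

definition F_cons :: "(real^'d \<Rightarrow> real^'k) \<Rightarrow> real \<Rightarrow> (real^'d \<Rightarrow> real^'d) set" where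
  "F_cons \<phi> \<Lambda> = {(\<lambda>x. transpose (jacobian \<phi> (at x)) *v w) | w :: real^'k. norm w \<le> \<Lambda>}"

end

theory Submission
  imports Defs
begin

lemma finite_sign_vecs: "finite (sign_vecs :: (real^'d) set)"
proof -
  have "sign_vecs \<subseteq> vec_lambda ` (PiE (UNIV::'d set) (\<lambda>_. {-1::real,1}))"
  proof
    fix v :: "real^'d" assume "v \<in> sign_vecs"
    then have "vec_nth v \<in> PiE UNIV (\<lambda>_. {-1::real,1})" by (auto simp: sign_vecs_def)
    then show "v \<in> vec_lambda ` (PiE (UNIV::'d set) (\<lambda>_. {-1::real,1}))"
      by (metis image_eqI vec_nth_inverse)
  qed
  moreover have "finite (vec_lambda ` (PiE (UNIV::'d set) (\<lambda>_. {-1::real,1})))"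
    by (intro finite_imageI finite_PiE) auto
  ultimately show ?thesis by (rule finite_subset)
qed

lemma ones_sign: "((\<chi> j. 1) :: real^'d) \<in> sign_vecs" by (simp add: sign_vecs_def)

lemma S_props:
  "finite (PiE {..<(n::nat)} (\<lambda>_. sign_vecs :: (real^'d) set))"
  "PiE {..<(n::nat)} (\<lambda>_. sign_vecs :: (real^'d) set) \<noteq> {}"
  using finite_sign_vecs ones_sign by (auto intro!: finite_PiE simp: PiE_eq_empty_iff)

lemma test: assumes "finite S" "S \<noteq> {}" shows "measure_pmf.expectation (pmf_of_set S) f = sum f S / card S"
  using integral_pmf_of_set[OF assms(2,1)] by simp

lemma frob_norm_eq: "frob_norm (A::real^'n^'m) = norm A"
  unfolding frob_norm_def norm_vec_def L2_set_def
  by (simp add: power2_norm_eq_inner inner_vec_def power2_eq_square abs_of_nonneg sum_nonneg)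

lemma norm_sq_mat: "(norm (A::real^'n^'m))^2 = (\<Sum>i\<in>UNIV. \<Sum>j\<in>UNIV. (A $ i $ j)^2)"
  unfolding frob_norm_eq[symmetric] frob_norm_def by (simp add: sum_nonneg)

lemma norm_sq_vec: "(norm (v::real^'n))^2 = (\<Sum>i\<in>UNIV. (v $ i)^2)"
  unfolding norm_vec_def L2_set_def by (simp add: sum_nonneg)

lemma avg_sqrt:
  fixes Q :: "'a \<Rightarrow> real" and C :: real
  assumes "finite S" "S \<noteq> {}" "\<And>s. s \<in> S \<Longrightarrow> Q s \<ge> 0" "(\<Sum>s\<in>S. Q s) \<le> card S * C"
  shows "(\<Sum>s\<in>S. sqrt (Q s)) \<le> card S * sqrt C"
proof -
  have N: "card S > 0" using assms by (simp add: card_gt_0_iff)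
  have "(\<Sum>s\<in>S. Q s) \<ge> 0" using assms(3) by (simp add: sum_nonneg)
  then have C0: "C \<ge> 0" using assms(4) N by (smt (verit) mult_pos_neg of_nat_0_less_iff)
  show ?thesis
  proof (cases "C = 0")
    case True
    then have "(\<Sum>s\<in>S. Q s) = 0" using assms(4) \<open>(\<Sum>s\<in>S. Q s) \<ge> 0\<close> by simp
    then have "\<forall>s\<in>S. Q s = 0" using sum_nonneg_eq_0_iff[OF assms(1)] assms(3) by blast
    then show ?thesis using True by simp
  next
    case False
    then have Cp: "sqrt C > 0" using C0 by simp
    have ineq: "sqrt (Q s) \<le> (Q s / sqrt C + sqrt C) / 2" if "s \<in> S" for s
    proof -
      have q: "Q s = sqrt (Q s) ^ 2" using assms(3)[OF that] by simp
      have c: "C = sqrt C ^ 2" using C0 by simp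
      have "0 \<le> (sqrt (Q s) - sqrt C)^2" by simp
      then have "2 * sqrt (Q s) * sqrt C \<le> Q s + C" by (subst q, subst (2) c) (simp add: power2_diff)
      then show ?thesis using Cp by (simp add: field_simps power2_eq_square)
    qed
    have "(\<Sum>s\<in>S. sqrt (Q s)) \<le> (\<Sum>s\<in>S. (Q s / sqrt C + sqrt C) / 2)"
      by (rule sum_mono) (rule ineq)
    also have "\<dots> = ((\<Sum>s\<in>S. Q s) / sqrt C + card S * sqrt C) / 2"
      by (simp add: sum_divide_distrib[symmetric] sum.distrib)
    also have "\<dots> \<le> (card S * C / sqrt C + card S * sqrt C) / 2"
      using assms(4) Cp by (simp add: divide_right_mono)
    also have "\<dots> = card S * sqrt C" using Cp C0 by (simp add: real_div_sqrt times_divide_eq_right[symmetric] del: times_divide_eq_right)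
    finally show ?thesis .
  qed
qed

lemma sign_cross:
  fixes i i' n :: nat and j j' :: "'d::finite"
  assumes "i < n" "(i,j) \<noteq> (i',j')"
  shows "(\<Sum>\<sigma>\<in>PiE {..<n} (\<lambda>_. sign_vecs::(real^'d) set). \<sigma> i $ j * \<sigma> i' $ j') = 0"
proof -
  define S where "S = PiE {..<n} (\<lambda>_. sign_vecs::(real^'d) set)"
  define fl where "fl \<sigma> = \<sigma>(i := (\<chi> k. if k = j then - \<sigma> i $ k else \<sigma> i $ k))" for \<sigma> :: "nat \<Rightarrow> real^'d"
  define G where "G \<sigma> = \<sigma> i $ j * \<sigma> i' $ j'" for \<sigma> :: "nat \<Rightarrow> real^'d"
  have mem: "fl \<sigma> \<in> S" if "\<sigma> \<in> S" for \<sigma>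
    using that assms(1) unfolding S_def fl_def sign_vecs_def
    by (auto simp: PiE_iff extensional_def)
  have inv: "fl (fl \<sigma>) = \<sigma>" for \<sigma>
    unfolding fl_def by (auto simp: vec_eq_iff)
  have val: "G (fl \<sigma>) = - G \<sigma>" for \<sigma>
    using assms(2) unfolding G_def fl_def by auto
  have "(\<Sum>\<sigma>\<in>S. G \<sigma>) = (\<Sum>\<sigma>\<in>S. G (fl \<sigma>))"
    by (rule sum.reindex_bij_witness[of _ fl fl]) (auto simp: inv mem)
  also have "\<dots> = - (\<Sum>\<sigma>\<in>S. G \<sigma>)" by (simp add: val sum_negf)
  finally have "(\<Sum>\<sigma>\<in>S. G \<sigma>) = 0" by simp
  then show ?thesis unfolding S_def G_def .
qed

lemma sign_diag:
  fixes i n :: nat and j :: "'d::finite"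
  assumes "i < n"
  shows "(\<Sum>\<sigma>\<in>PiE {..<n} (\<lambda>_. sign_vecs::(real^'d) set). \<sigma> i $ j * \<sigma> i $ j)
     = card (PiE {..<n} (\<lambda>_. sign_vecs::(real^'d) set))"
proof -
  have "\<sigma> i $ j * \<sigma> i $ j = 1" if "\<sigma> \<in> PiE {..<n} (\<lambda>_. sign_vecs::(real^'d) set)" for \<sigma>
  proof -
    have "\<sigma> i $ j \<in> {-1,1}" using that assms unfolding sign_vecs_def by (auto simp: PiE_iff)
    then show ?thesis by auto
  qed
  then show ?thesis by simp
qed

lemma sign_E:
  fixes n :: nat and p q :: "nat \<times> 'd::finite"
  assumes "p \<in> {..<n} \<times> UNIV" "q \<in> {..<n} \<times> UNIV"
  shows "(\<Sum>\<sigma>\<in>PiE {..<n} (\<lambda>_. sign_vecs::(real^'d) set). \<sigma> (fst p) $ snd p * \<sigma> (fst q) $ snd q)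
     = (if p = q then real (card (PiE {..<n} (\<lambda>_. sign_vecs::(real^'d) set))) else 0)"
  using assms sign_diag[of "fst p" n "snd p"] sign_cross[of "fst p" n "snd p" "fst q" "snd q"]
  by (cases p; cases q) auto

lemma sign_sq:
  fixes a :: "nat \<times> 'd::finite \<Rightarrow> real" and n :: nat
  shows "(\<Sum>\<sigma>\<in>PiE {..<n} (\<lambda>_. sign_vecs::(real^'d) set). (\<Sum>p\<in>{..<n} \<times> UNIV. \<sigma> (fst p) $ snd p * a p)^2)
     = card (PiE {..<n} (\<lambda>_. sign_vecs::(real^'d) set)) * (\<Sum>p\<in>{..<n} \<times> UNIV. (a p)^2)"
proof -
  define S where "S = PiE {..<n} (\<lambda>_. sign_vecs::(real^'d) set)"
  define P where "P = {..<n} \<times> (UNIV :: 'd set)"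
  have "(\<Sum>\<sigma>\<in>S. (\<Sum>p\<in>P. \<sigma> (fst p) $ snd p * a p)^2)
     = (\<Sum>\<sigma>\<in>S. \<Sum>p\<in>P. \<Sum>q\<in>P. a p * a q * (\<sigma> (fst p) $ snd p * \<sigma> (fst q) $ snd q))"
    by (simp add: power2_eq_square sum_product mult_ac)
  also have "\<dots> = (\<Sum>p\<in>P. \<Sum>\<sigma>\<in>S. \<Sum>q\<in>P. a p * a q * (\<sigma> (fst p) $ snd p * \<sigma> (fst q) $ snd q))"
    by (rule sum.swap)
  also have "\<dots> = (\<Sum>p\<in>P. \<Sum>q\<in>P. \<Sum>\<sigma>\<in>S. a p * a q * (\<sigma> (fst p) $ snd p * \<sigma> (fst q) $ snd q))"
    by (rule sum.cong[OF refl], rule sum.swap)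
  also have "\<dots> = (\<Sum>p\<in>P. \<Sum>q\<in>P. a p * a q * (if p = q then real (card S) else 0))"
    unfolding sum_distrib_left[symmetric]
    by (intro sum.cong refl) (simp add: S_def P_def sign_E)
  also have "\<dots> = (\<Sum>p\<in>P. a p * a p * real (card S))"
    by (intro sum.cong refl) (simp add: P_def if_distrib if_distribR cong: if_cong)
  also have "\<dots> = card S * (\<Sum>p\<in>P. (a p)^2)"
    by (simp add: sum_distrib_left power2_eq_square mult_ac)
  finally show ?thesis unfolding S_def P_def .
qed


lemma sign_sq2:
  fixes a :: "nat \<Rightarrow> 'd::finite \<Rightarrow> real" and n :: nat
  shows "(\<Sum>\<sigma>\<in>PiE {..<n} (\<lambda>_. sign_vecs::(real^'d) set). (\<Sum>i<n. \<Sum>j\<in>UNIV. \<sigma> i $ j * a i j)^2)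
     = card (PiE {..<n} (\<lambda>_. sign_vecs::(real^'d) set)) * (\<Sum>i<n. \<Sum>j\<in>UNIV. (a i j)^2)"
  using sign_sq[where n=n and a="\<lambda>p. a (fst p) (snd p)"]
  by (simp add: sum.cartesian_product case_prod_beta)

lemma rad_generic:
  fixes h Q :: "(nat \<Rightarrow> real^'d::finite) \<Rightarrow> real" and n :: nat and C \<Lambda> :: real
  assumes "\<Lambda> \<ge> 0"
    and "\<And>\<sigma>. \<sigma> \<in> PiE {..<n} (\<lambda>_. sign_vecs) \<Longrightarrow> h \<sigma> \<le> \<Lambda> * sqrt (Q \<sigma>)"
    and "\<And>\<sigma>. Q \<sigma> \<ge> 0"
    and "(\<Sum>\<sigma>\<in>PiE {..<n} (\<lambda>_. sign_vecs). Q \<sigma>) \<le> card (PiE {..<n} (\<lambda>_. sign_vecs::(real^'d) set)) * C"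
  shows "measure_pmf.expectation (pmf_of_set (PiE {..<n} (\<lambda>_. sign_vecs))) h \<le> \<Lambda> * sqrt C"
proof -
  define S where "S = PiE {..<n} (\<lambda>_. sign_vecs::(real^'d) set)"
  have fin: "finite S" and ne: "S \<noteq> {}" using S_props unfolding S_def by auto
  have N: "real (card S) > 0" using fin ne by (simp add: card_gt_0_iff)
  have "measure_pmf.expectation (pmf_of_set S) h = sum h S / card S"
    using integral_pmf_of_set[OF ne fin] by simp
  also have "\<dots> \<le> (\<Sum>\<sigma>\<in>S. \<Lambda> * sqrt (Q \<sigma>)) / card S"
    using N assms(2) by (intro divide_right_mono sum_mono) (auto simp: S_def)
  also have "\<dots> = \<Lambda> * (\<Sum>\<sigma>\<in>S. sqrt (Q \<sigma>)) / card S" by (simp add: sum_distrib_left)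
  also have "\<dots> \<le> \<Lambda> * (card S * sqrt C) / card S"
    using avg_sqrt[OF fin ne, of Q C] assms(1,3,4) N unfolding S_def
    by (intro divide_right_mono mult_left_mono) auto
  also have "\<dots> = \<Lambda> * sqrt C" using N by simp
  finally show ?thesis unfolding S_def .
qed

theorem theorem3p6:
  fixes \<phi> :: "real^'d \<Rightarrow> real^'k"
    and B L \<Lambda> :: real and n :: nat and x :: "nat \<Rightarrow> real^'d"
  assumes diff: "\<And>z. \<phi> differentiable (at z)"
    and bndB: "\<And>z. norm (\<phi> z) \<le> B"
    and bndL: "\<And>z. frob_norm (jacobian \<phi> (at z)) \<le> L"
    and Lpos: "\<Lambda> > 0"
    and npos: "n > 0"
  shows "emp_rademacher n x (F_unc \<phi> \<Lambda>) \<le> \<Lambda> * B * sqrt (real CARD('d)) / sqrt (real n)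
       \<and> emp_rademacher n x (F_cons \<phi> \<Lambda>) \<le> \<Lambda> * L / sqrt (real n)"
proof
  define S where "S = PiE {..<n} (\<lambda>_. sign_vecs::(real^'d) set)"
  have B0: "B \<ge> 0" using bndB[of 0] norm_ge_zero[of "\<phi> 0"] by linarith
  have L0: "L \<ge> 0" using bndL[of 0] frob_norm_eq[of "jacobian \<phi> (at 0)"] norm_ge_zero[of "jacobian \<phi> (at 0)"] by linarith
  have nn: "real n > 0" using npos by simp
  have fin: "finite S" and ne: "S \<noteq> {}" using S_props unfolding S_def by auto
  define M where "M \<sigma> = ((\<chi> j. \<chi> l. \<Sum>i<n. \<sigma> i $ j * \<phi> (x i) $ l) :: real^'k^'d)" for \<sigma> :: "nat \<Rightarrow> real^'d"
  have lin: "(\<Sum>i<n. \<sigma> i \<bullet> (W *v \<phi> (x i))) = W \<bullet> M \<sigma>" for \<sigma> and W :: "real^'k^'d"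
  proof -
    have "(\<Sum>i<n. \<sigma> i \<bullet> (W *v \<phi> (x i))) = (\<Sum>i<n. \<Sum>j\<in>UNIV. \<Sum>l\<in>UNIV. W $ j $ l * (\<sigma> i $ j * \<phi> (x i) $ l))"
      by (simp add: inner_vec_def matrix_vector_mult_def sum_distrib_left mult_ac)
    also have "\<dots> = (\<Sum>j\<in>UNIV. \<Sum>l\<in>UNIV. \<Sum>i<n. W $ j $ l * (\<sigma> i $ j * \<phi> (x i) $ l))"
      by (subst sum.swap, rule sum.cong[OF refl], rule sum.swap)
    also have "\<dots> = W \<bullet> M \<sigma>"
      by (simp add: M_def inner_vec_def sum_distrib_left)
    finally show ?thesis .
  qed
  have supU: "(SUP f\<in>F_unc \<phi> \<Lambda>. \<Sum>i<n. \<sigma> i \<bullet> f (x i)) \<le> \<Lambda> * sqrt ((norm (M \<sigma>))^2)" for \<sigma>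
  proof (rule cSUP_least)
    show "F_unc \<phi> \<Lambda> \<noteq> {}"
      unfolding F_unc_def using Lpos by (auto intro!: exI[of _ "0::real^'k^'d"] simp: frob_norm_def)
  next
    fix f assume "f \<in> F_unc \<phi> \<Lambda>"
    then obtain W :: "real^'k^'d" where f: "f = (\<lambda>x. W *v \<phi> x)" and W: "norm W \<le> \<Lambda>"
      unfolding F_unc_def by (auto simp: frob_norm_eq)
    have "(\<Sum>i<n. \<sigma> i \<bullet> f (x i)) = W \<bullet> M \<sigma>" using lin f by simp
    also have "\<dots> \<le> norm W * norm (M \<sigma>)" by (rule norm_cauchy_schwarz)
    also have "\<dots> \<le> \<Lambda> * norm (M \<sigma>)" using W by (simp add: mult_right_mono)
    finally show "(\<Sum>i<n. \<sigma> i \<bullet> f (x i)) \<le> \<Lambda> * sqrt ((norm (M \<sigma>))^2)" by simp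
  qed
  have QU: "(\<Sum>\<sigma>\<in>S. (norm (M \<sigma>))^2) \<le> card S * (real CARD('d) * real n * B^2)"
  proof -
    have nM: "(norm (M \<sigma>))^2 = (\<Sum>j\<in>UNIV. \<Sum>l\<in>UNIV. (\<Sum>i<n. \<Sum>j'\<in>UNIV. \<sigma> i $ j' * (if j' = j then \<phi> (x i) $ l else 0))^2)" for \<sigma>
      by (simp add: norm_sq_mat M_def if_distrib if_distribR cong: if_cong)
    have "(\<Sum>\<sigma>\<in>S. (norm (M \<sigma>))^2) = (\<Sum>j\<in>UNIV. \<Sum>l\<in>UNIV. \<Sum>\<sigma>\<in>S. (\<Sum>i<n. \<Sum>j'\<in>UNIV. \<sigma> i $ j' * (if j' = j then \<phi> (x i) $ l else 0))^2)"
      unfolding nM by (subst sum.swap, rule sum.cong[OF refl], rule sum.swap)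
    also have "\<dots> = (\<Sum>j\<in>(UNIV::'d set). \<Sum>l\<in>UNIV. card S * (\<Sum>i<n. (\<phi> (x i) $ l)^2))"
      unfolding S_def sign_sq2 by (simp add: if_distrib if_distribR cong: if_cong)
    also have "\<dots> = card S * (real CARD('d) * (\<Sum>i<n. (norm (\<phi> (x i)))^2))"
      unfolding norm_sq_vec sum_distrib_left
      by (subst (2) sum.swap) (simp add: sum_distrib_left mult_ac)
    also have "\<dots> \<le> card S * (real CARD('d) * (\<Sum>i<n. B^2))"
      using bndB B0 by (intro mult_left_mono sum_mono power_mono) auto
    also have "\<dots> = card S * (real CARD('d) * real n * B^2)" by simp
    finally show ?thesis .
  qed
  have EU: "measure_pmf.expectation (pmf_of_set S) (\<lambda>\<sigma>. SUP f\<in>F_unc \<phi> \<Lambda>. \<Sum>i<n. \<sigma> i \<bullet> f (x i))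
      \<le> \<Lambda> * sqrt (real CARD('d) * real n * B^2)"
    unfolding S_def
    by (rule rad_generic[where Q = "\<lambda>\<sigma>. (norm (M \<sigma>))^2"]) (use Lpos supU QU S_def in auto)
  have "sqrt (real CARD('d) * real n * B^2) = B * sqrt (real CARD('d)) * sqrt (real n)"
    using B0 by (simp add: real_sqrt_mult)
  then have EU': "measure_pmf.expectation (pmf_of_set S) (\<lambda>\<sigma>. SUP f\<in>F_unc \<phi> \<Lambda>. \<Sum>i<n. \<sigma> i \<bullet> f (x i))
      \<le> (\<Lambda> * B * sqrt (real CARD('d))) * sqrt (real n)" using EU by (simp add: mult_ac)
  have sq: "sqrt (real n) / real n = 1 / sqrt (real n)" using nn by (metis real_div_sqrt div_by_1 divide_divide_eq_right less_imp_le mult.commute real_sqrt_gt_0_iff times_divide_eq_left order_less_irrefl)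
  show "emp_rademacher n x (F_unc \<phi> \<Lambda>) \<le> \<Lambda> * B * sqrt (real CARD('d)) / sqrt (real n)"
  proof -
    have "emp_rademacher n x (F_unc \<phi> \<Lambda>) = (1 / real n) * measure_pmf.expectation (pmf_of_set S) (\<lambda>\<sigma>. SUP f\<in>F_unc \<phi> \<Lambda>. \<Sum>i<n. \<sigma> i \<bullet> f (x i))"
      by (simp add: emp_rademacher_def S_def)
    also have "\<dots> \<le> (1 / real n) * ((\<Lambda> * B * sqrt (real CARD('d))) * sqrt (real n))"
      using EU' nn by (intro mult_left_mono) auto
    also have "\<dots> = (\<Lambda> * B * sqrt (real CARD('d))) * (sqrt (real n) / real n)" by simp
    also have "\<dots> = \<Lambda> * B * sqrt (real CARD('d)) / sqrt (real n)" unfolding sq by simp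
    finally show ?thesis .
  qed
next
  define S where "S = PiE {..<n} (\<lambda>_. sign_vecs::(real^'d) set)"
  have L0: "L \<ge> 0" using bndL[of 0] frob_norm_eq[of "jacobian \<phi> (at 0)"] norm_ge_zero[of "jacobian \<phi> (at 0)"] by linarith
  have nn: "real n > 0" using npos by simp
  define J where "J i = jacobian \<phi> (at (x i))" for i
  define V where "V \<sigma> = (\<Sum>i<n. J i *v \<sigma> i)" for \<sigma> :: "nat \<Rightarrow> real^'d"
  have supC: "(SUP f\<in>F_cons \<phi> \<Lambda>. \<Sum>i<n. \<sigma> i \<bullet> f (x i)) \<le> \<Lambda> * sqrt ((norm (V \<sigma>))^2)" for \<sigma>
  proof (rule cSUP_least)
    show "F_cons \<phi> \<Lambda> \<noteq> {}"
      unfolding F_cons_def using Lpos by (auto intro!: exI[of _ "0::real^'k"])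
  next
    fix f assume "f \<in> F_cons \<phi> \<Lambda>"
    then obtain w :: "real^'k" where f: "f = (\<lambda>x. transpose (jacobian \<phi> (at x)) *v w)" and w: "norm w \<le> \<Lambda>"
      unfolding F_cons_def by auto
    have "(\<Sum>i<n. \<sigma> i \<bullet> f (x i)) = (\<Sum>i<n. (J i *v \<sigma> i) \<bullet> w)"
      unfolding f J_def
      by (intro sum.cong refl) (metis dot_lmul_matrix vector_transpose_matrix)
    also have "\<dots> = V \<sigma> \<bullet> w" by (simp add: V_def inner_sum_left)
    also have "\<dots> \<le> norm (V \<sigma>) * norm w" by (rule norm_cauchy_schwarz)
    also have "\<dots> \<le> norm (V \<sigma>) * \<Lambda>" using w by (simp add: mult_left_mono)
    finally show "(\<Sum>i<n. \<sigma> i \<bullet> f (x i)) \<le> \<Lambda> * sqrt ((norm (V \<sigma>))^2)" by (simp add: mult_ac)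
  qed
  have QC: "(\<Sum>\<sigma>\<in>S. (norm (V \<sigma>))^2) \<le> card S * (real n * L^2)"
  proof -
    have nV: "(norm (V \<sigma>))^2 = (\<Sum>l\<in>UNIV. (\<Sum>i<n. \<Sum>j\<in>UNIV. \<sigma> i $ j * J i $ l $ j)^2)" for \<sigma>
      unfolding norm_sq_vec V_def by (simp add: matrix_vector_mult_def mult_ac)
    have "(\<Sum>\<sigma>\<in>S. (norm (V \<sigma>))^2) = (\<Sum>l\<in>UNIV. \<Sum>\<sigma>\<in>S. (\<Sum>i<n. \<Sum>j\<in>UNIV. \<sigma> i $ j * J i $ l $ j)^2)"
      unfolding nV by (rule sum.swap)
    also have "\<dots> = (\<Sum>l\<in>(UNIV::'k set). card S * (\<Sum>i<n. \<Sum>j\<in>UNIV. (J i $ l $ j)^2))"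
      unfolding S_def sign_sq2 by simp
    also have "\<dots> = card S * (\<Sum>i<n. (frob_norm (J i))^2)"
      unfolding frob_norm_def sum_distrib_left[symmetric]
      by (subst sum.swap) (simp add: sum_nonneg)
    also have "\<dots> \<le> card S * (\<Sum>i<n. L^2)"
      using bndL unfolding J_def
      by (intro mult_left_mono sum_mono power_mono) (auto simp: frob_norm_def sum_nonneg)
    also have "\<dots> = card S * (real n * L^2)" by simp
    finally show ?thesis .
  qed
  have EC: "measure_pmf.expectation (pmf_of_set S) (\<lambda>\<sigma>. SUP f\<in>F_cons \<phi> \<Lambda>. \<Sum>i<n. \<sigma> i \<bullet> f (x i))
      \<le> \<Lambda> * sqrt (real n * L^2)"
    unfolding S_def
    by (rule rad_generic[where Q = "\<lambda>\<sigma>. (norm (V \<sigma>))^2"]) (use Lpos supC QC S_def in auto)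
  have "sqrt (real n * L^2) = L * sqrt (real n)"
    using L0 by (simp add: real_sqrt_mult)
  then have EC': "measure_pmf.expectation (pmf_of_set S) (\<lambda>\<sigma>. SUP f\<in>F_cons \<phi> \<Lambda>. \<Sum>i<n. \<sigma> i \<bullet> f (x i))
      \<le> (\<Lambda> * L) * sqrt (real n)" using EC by (simp add: mult_ac)
  have sq: "sqrt (real n) / real n = 1 / sqrt (real n)" using nn by (metis real_div_sqrt div_by_1 divide_divide_eq_right less_imp_le mult.commute real_sqrt_gt_0_iff times_divide_eq_left order_less_irrefl)
  have "emp_rademacher n x (F_cons \<phi> \<Lambda>) = (1 / real n) * measure_pmf.expectation (pmf_of_set S) (\<lambda>\<sigma>. SUP f\<in>F_cons \<phi> \<Lambda>. \<Sum>i<n. \<sigma> i \<bullet> f (x i))"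
    by (simp add: emp_rademacher_def S_def)
  also have "\<dots> \<le> (1 / real n) * ((\<Lambda> * L) * sqrt (real n))"
    using EC' nn by (intro mult_left_mono) auto
  also have "\<dots> = (\<Lambda> * L) * (sqrt (real n) / real n)" by simp
  also have "\<dots> = \<Lambda> * L / sqrt (real n)" unfolding sq by simp
  finally show "emp_rademacher n x (F_cons \<phi> \<Lambda>) \<le> \<Lambda> * L / sqrt (real n)" .
qed

end
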